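(* Let $(\mathbf{x}_i,y_i)_{i=1}^n\subset\mathbb{R}^d\times\{\pm1\}$ satisfy $\|\mathbf{x}_i\|\le 1$ for all $i$, and suppose there are $\gamma>0$ and a unit vector $\mathbf{w}_*$ with $y_i\mathbf{x}_i^\top\mathbf{w}_*\ge\gamma$ for all $i$. Let $L(\mathbf{w})=\frac1n\sum_{i=1}^n\ln\big(1+\exp(-y_i\mathbf{x}_i^\top\mathbf{w})\big)$ and run gradient descent $\mathbf{w}_t=\mathbf{w}_{t-1}-\eta\nabla L(\mathbf{w}_{t-1})$ from $\mathbf{w}_0=0$. Let $T$ be an integer with $T\ge 120\max\{e,n\}/\gamma^2$ and set $\eta:=\gamma^2T/120$. Then $\tau:=\frac{60}{\gamma^2}\max\big\{\eta,n,e,\frac{\eta+n}{\eta}\ln\frac{\eta+n}{\eta}\big\}\le T/2$, and \[L(\mathbf{w}_T)\le 480\,\frac{\ln^2(\gamma^4T^2)}{\gamma^4T^2}.\] *)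

theory Defs
  imports "HOL-Analysis.Analysis"
begin

definition logloss :: "nat \<Rightarrow> (nat \<Rightarrow> 'a::euclidean_space) \<Rightarrow> (nat \<Rightarrow> real) \<Rightarrow> 'a \<Rightarrow> real" where
  "logloss n x y w = (1 / real n) * (\<Sum>i<n. ln (1 + exp (- (y i * (x i \<bullet> w)))))"

definition grad :: "('a::euclidean_space \<Rightarrow> real) \<Rightarrow> 'a \<Rightarrow> 'a" where
  "grad f w = (THE g. (f has_derivative (\<lambda>h. g \<bullet> h)) (at w))"

fun gd :: "real \<Rightarrow> ('a::euclidean_space \<Rightarrow> real) \<Rightarrow> nat \<Rightarrow> 'a" where
  "gd eta f 0 = 0"
| "gd eta f (Suc t) = gd eta f t - eta *\<^sub>R grad f (gd eta f t)"

end

theory Submission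
  imports Defs
begin

definition ell :: "real \<Rightarrow> real" where "ell s = ln (1 + exp (- s))"
definition sg :: "real \<Rightarrow> real" where "sg s = 1 / (1 + exp s)"

lemma onepexp_pos[simp]: "0 < 1 + exp (t::real)" using exp_gt_zero[of t] by linarith
lemma onepexp_nz[simp]: "1 + exp (t::real) \<noteq> 0" using onepexp_pos[of t] by linarith

lemma sg_pos: "0 < sg s" by (simp add: sg_def add_pos_pos)
lemma sg_le1: "sg s \<le> 1" unfolding sg_def by (simp add: add_pos_pos)
lemma ell_pos: "0 < ell s" unfolding ell_def by (rule ln_gt_zero) simp

lemma sg_alt: "sg s = exp (-s) / (1 + exp (-s))"
  unfolding sg_def by (simp add: exp_minus field_simps add_pos_pos)

lemma sg_le_ell: "sg s \<le> ell s"
proof -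
  define u where "u = exp (-s)"
  have u: "u > 0" using u_def by simp
  have "ln (1/(1+u)) \<le> 1/(1+u) - 1" by (rule ln_le_minus_one) (use u in simp)
  moreover have "ln (1/(1+u)) = - ln (1+u)" using u by (simp add: ln_div)
  moreover have "1/(1+u) - 1 = - (u/(1+u))" using u by (simp add: field_simps)
  ultimately have "u/(1+u) \<le> ln (1+u)" by linarith
  thus ?thesis by (simp add: sg_alt ell_def u_def)
qed

lemma ratio_eq: "(1 + exp (- b)) / (1 + exp (- a)) = (1 - sg a) + sg a * exp (a - b)"
proof -
  have p: "exp a > 0" "exp b > 0" "1 + exp a \<noteq> 0" "1 + exp b \<noteq> 0"
    by auto
  show ?thesis unfolding sg_def using p
    by (simp add: exp_minus exp_diff divide_simps add_pos_pos) (simp add: algebra_simps)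
qed

lemma ell_diff: "ell b - ell a = ln ((1 - sg a) + sg a * exp (a - b))"
proof -
  have p: "1 + exp (-a) > 0" "1 + exp (-b) > 0" by (auto intro: add_pos_pos)
  show ?thesis unfolding ell_def ratio_eq[symmetric] using p by (simp add: ln_div)
qed

lemma ell_conv: "ell a + sg a * (a - b) \<le> ell b"
proof -
  have "exp ((1 - sg a) *\<^sub>R 0 + sg a *\<^sub>R (a - b)) \<le> (1 - sg a) * exp 0 + sg a * exp (a - b)"
    by (rule convex_onD[OF exp_convex]) (use sg_pos[of a] sg_le1[of a] in auto)
  hence "sg a * (a - b) \<le> ln ((1 - sg a) + sg a * exp (a - b))"
    by (subst ln_ge_iff) (use sg_pos[of a] sg_le1[of a] in \<open>auto intro: add_nonneg_pos\<close>)
  thus ?thesis using ell_diff[of b a] by linarith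
qed

lemma exp_neg_bound: fixes s :: real assumes "0 \<le> s" shows "exp (-s) \<le> 1 - s + s^2"
proof -
  have "1 + s \<le> exp s" by (rule exp_ge_add_one_self)
  hence "exp (-s) \<le> 1/(1+s)" using assms by (simp add: exp_minus divide_simps)
  also have "\<dots> \<le> 1 - s + s^2" using assms
    by (simp add: divide_simps power2_eq_square) (simp add: algebra_simps mult_nonneg_nonneg)
  finally show ?thesis .
qed

lemma exp_quad: fixes c :: real assumes "\<bar>c\<bar> \<le> 1" shows "exp c \<le> 1 + c + c^2"
proof (cases "c \<ge> 0")
  case True thus ?thesis using exp_bound[of c] assms by auto
next
  case False thus ?thesis using exp_neg_bound[of "-c"] by simp
qed

lemma ell_step: assumes "\<bar>b\<bar> \<le> 1" shows "ell (a + b) \<le> ell a - sg a * b + sg a * b^2"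
proof -
  have pos: "0 < (1 - sg a) + sg a * exp (a - (a+b))"
    using sg_pos[of a] sg_le1[of a] by (auto intro: add_nonneg_pos)
  have "ell (a+b) - ell a \<le> (1 - sg a) + sg a * exp (a - (a+b)) - 1"
    unfolding ell_diff by (rule ln_le_minus_one[OF pos])
  also have "\<dots> = sg a * (exp (-b) - 1)" by (simp add: algebra_simps)
  also have "\<dots> \<le> sg a * (-b + b^2)"
    using exp_quad[of "-b"] assms sg_pos[of a] by (intro mult_left_mono) auto
  finally show ?thesis by (simp add: algebra_simps)
qed

lemma ell_small: assumes "sg a \<le> 1/2" shows "ell a \<le> 2 * sg a"
proof -
  have "exp a \<ge> 1" using assms unfolding sg_def by (simp add: divide_simps add_pos_pos)
  hence "a \<ge> 0" by simp
  hence "exp (-a) \<le> 1" by simp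
  have "ell a \<le> exp (-a)" unfolding ell_def by (rule ln_add_one_self_le_self) simp
  also have "\<dots> \<le> 2 * sg a" using \<open>exp (-a) \<le> 1\<close> unfolding sg_alt
    by (simp add: divide_simps add_pos_pos)
  finally show ?thesis .
qed

lemma sg_quad: "ell a - (ell a)^2 \<le> sg a"
proof -
  have e: "exp (ell a) = 1 + exp (-a)" unfolding ell_def by (simp add: add_pos_pos)
  have p: "1 + exp (-a) > 0" by (auto intro: add_pos_pos)
  have "sg a = 1 - exp (- ell a)" unfolding sg_def exp_minus e using p by (simp add: field_simps)
  thus ?thesis using exp_neg_bound[of "ell a"] ell_pos[of a] by simp
qed

lemma ell_le_exp: "ell a \<le> exp (-a)"
  unfolding ell_def by (rule ln_add_one_self_le_self) simp

lemma ell_mono: "a \<le> b \<Longrightarrow> ell b \<le> ell a"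
  unfolding ell_def by (simp add: add_pos_pos)


lemma hd: "((\<lambda>w. logloss n x y w) has_derivative
   (\<lambda>h. (1 / real n) * (\<Sum>i<n. - sg (y i * (x i \<bullet> w)) * (y i * (x i \<bullet> h))))) (at w)"
  unfolding logloss_def
  apply (rule derivative_eq_intros refl | simp)+
  apply (simp add: fun_eq_iff sg_alt divide_inverse mult_ac)
  done

lemma grad_eq:
  fixes f :: "'a::euclidean_space \<Rightarrow> real"
  assumes "(f has_derivative (\<lambda>h. g \<bullet> h)) (at w)"
  shows "grad f w = g"
  unfolding grad_def
proof (rule the_equality)
  show "(f has_derivative (\<lambda>h. g \<bullet> h)) (at w)" by (rule assms)
  fix g' assume "(f has_derivative (\<lambda>h. g' \<bullet> h)) (at w)"
  from has_derivative_unique[OF this assms]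
  have "(\<lambda>h. g' \<bullet> h) = (\<lambda>h. g \<bullet> h)" .
  hence "g' \<bullet> (g' - g) = g \<bullet> (g' - g)" by metis
  hence "(g' - g) \<bullet> (g' - g) = 0" by (simp add: inner_diff_left)
  thus "g' = g" by simp
qed

locale LR =
  fixes n :: nat and x :: "nat \<Rightarrow> 'a::euclidean_space" and y :: "nat \<Rightarrow> real"
    and \<gamma> :: real and wstar :: 'a
  assumes n_pos: "n \<ge> 1"
    and x_bound: "\<forall>i<n. norm (x i) \<le> 1"
    and y_sign: "\<forall>i<n. y i \<in> {-1, 1}"
    and gamma_pos: "\<gamma> > 0"
    and wstar_unit: "norm wstar = 1"
    and margin: "\<forall>i<n. y i * (x i \<bullet> wstar) \<ge> \<gamma>"
begin

definition z where "z i = y i *\<^sub>R x i"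
definition L where "L w = logloss n x y w"
definition G where "G w = (1 / real n) * (\<Sum>i<n. sg (z i \<bullet> w))"
definition D where "D w = - ((1 / real n) *\<^sub>R (\<Sum>i<n. sg (z i \<bullet> w) *\<^sub>R z i))"

lemma zw: "y i * (x i \<bullet> w) = z i \<bullet> w" unfolding z_def by simp

lemma z_norm: "i < n \<Longrightarrow> norm (z i) \<le> 1"
  using x_bound y_sign unfolding z_def by auto

lemma z_margin: "i < n \<Longrightarrow> z i \<bullet> wstar \<ge> \<gamma>"
  using margin unfolding z_def by auto

lemma npos: "real n > 0" using n_pos by simp

lemma L_eq: "L w = (1 / real n) * (\<Sum>i<n. ell (z i \<bullet> w))"
  unfolding L_def logloss_def ell_def zw ..

lemma gradD: "grad (logloss n x y) w = D w"
proof (rule grad_eq)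
  show "(logloss n x y has_derivative (\<lambda>h. D w \<bullet> h)) (at w)"
  proof -
    have "(\<lambda>h. (1 / real n) * (\<Sum>i<n. - sg (y i * (x i \<bullet> w)) * (y i * (x i \<bullet> h)))) = (\<lambda>h. D w \<bullet> h)"
      unfolding D_def zw by (simp add: fun_eq_iff inner_sum_left z_def sum_negf mult_ac)
    thus ?thesis using hd[of n x y w] by simp
  qed
qed

lemma G_le_L: "G w \<le> L w"
proof -
  have "(\<Sum>i<n. sg (z i \<bullet> w)) \<le> (\<Sum>i<n. ell (z i \<bullet> w))" by (rule sum_mono) (rule sg_le_ell)
  thus ?thesis unfolding G_def L_eq using npos by (simp add: divide_right_mono)
qed

lemma ne: "{..<n} \<noteq> {}"
proof -
  have "0 \<in> {..<n}" using n_pos by simp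
  thus ?thesis by blast
qed

lemma G_pos: "G w > 0"
  unfolding G_def using npos sum_pos[OF finite_lessThan ne, of "\<lambda>i. sg (z i \<bullet> w)"] sg_pos
  by simp

lemma L_pos: "L w > 0"
  unfolding L_eq using npos sum_pos[OF finite_lessThan ne, of "\<lambda>i. ell (z i \<bullet> w)"] ell_pos
  by simp

lemma G_le1: "G w \<le> 1"
proof -
  have "(\<Sum>i<n. sg (z i \<bullet> w)) \<le> (\<Sum>i<n. 1)" by (rule sum_mono) (rule sg_le1)
  thus ?thesis unfolding G_def using npos by (simp add: divide_simps)
qed

lemma norm_D: "norm (D w) \<le> G w"
proof -
  have "norm (\<Sum>i<n. sg (z i \<bullet> w) *\<^sub>R z i) \<le> (\<Sum>i<n. norm (sg (z i \<bullet> w) *\<^sub>R z i))"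
    by (rule norm_sum)
  also have "\<dots> \<le> (\<Sum>i<n. sg (z i \<bullet> w))"
  proof (rule sum_mono)
    fix i assume "i \<in> {..<n}"
    thus "norm (sg (z i \<bullet> w) *\<^sub>R z i) \<le> sg (z i \<bullet> w)"
      using z_norm[of i] sg_pos[of "z i \<bullet> w"]
      by (simp add: mult_left_le)
  qed
  finally show ?thesis unfolding D_def G_def using npos by (simp add: divide_simps)
qed

lemma D_wstar: "D w \<bullet> wstar \<le> - \<gamma> * G w"
proof -
  have "(\<Sum>i<n. sg (z i \<bullet> w) * \<gamma>) \<le> (\<Sum>i<n. sg (z i \<bullet> w) * (z i \<bullet> wstar))"
  proof (rule sum_mono)
    fix i assume "i \<in> {..<n}"
    thus "sg (z i \<bullet> w) * \<gamma> \<le> sg (z i \<bullet> w) * (z i \<bullet> wstar)"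
      using z_margin[of i] sg_pos[of "z i \<bullet> w"] by (intro mult_left_mono) auto
  qed
  hence "(1 / real n) * (\<Sum>i<n. sg (z i \<bullet> w) * \<gamma>) \<le> (1 / real n) * (\<Sum>i<n. sg (z i \<bullet> w) * (z i \<bullet> wstar))"
    using npos by (intro mult_left_mono) auto
  moreover have "D w \<bullet> wstar = - ((1 / real n) * (\<Sum>i<n. sg (z i \<bullet> w) * (z i \<bullet> wstar)))"
    unfolding D_def by (simp add: inner_sum_left)
  moreover have "\<gamma> * G w = (1 / real n) * (\<Sum>i<n. sg (z i \<bullet> w) * \<gamma>)"
    unfolding G_def by (simp add: sum_distrib_left mult_ac)
  ultimately show ?thesis by linarith
qed

lemma D_conv: "D w \<bullet> (u - w) \<le> L u - L w"
proof -
  have "(\<Sum>i<n. - sg (z i \<bullet> w) * (z i \<bullet> u - z i \<bullet> w)) \<le> (\<Sum>i<n. ell (z i \<bullet> u) - ell (z i \<bullet> w))"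
  proof (rule sum_mono)
    fix i show "- sg (z i \<bullet> w) * (z i \<bullet> u - z i \<bullet> w) \<le> ell (z i \<bullet> u) - ell (z i \<bullet> w)"
      using ell_conv[of "z i \<bullet> w" "z i \<bullet> u"] by (simp add: algebra_simps)
  qed
  moreover have "D w \<bullet> (u - w) = (1 / real n) * (\<Sum>i<n. - sg (z i \<bullet> w) * (z i \<bullet> u - z i \<bullet> w))"
    unfolding D_def by (simp add: inner_sum_left inner_diff_right sum_negf right_diff_distrib sum_subtractf diff_divide_distrib)
  moreover have "L u - L w = (1 / real n) * (\<Sum>i<n. ell (z i \<bullet> u) - ell (z i \<bullet> w))"
    unfolding L_eq by (simp add: sum_subtractf right_diff_distrib)
  ultimately show ?thesis using npos by (simp add: divide_right_mono)
qed


lemma L_Rw: assumes "R \<ge> 0" shows "L (R *\<^sub>R wstar) \<le> exp (- (\<gamma> * R))"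
proof -
  have "(\<Sum>i<n. ell (z i \<bullet> (R *\<^sub>R wstar))) \<le> (\<Sum>i<n. exp (- (\<gamma> * R)))"
  proof (rule sum_mono)
    fix i assume "i \<in> {..<n}"
    hence "R * \<gamma> \<le> R * (z i \<bullet> wstar)" using z_margin[of i] assms
      by (intro mult_left_mono) auto
    hence "\<gamma> * R \<le> z i \<bullet> (R *\<^sub>R wstar)" by (simp add: mult.commute)
    hence "ell (z i \<bullet> (R *\<^sub>R wstar)) \<le> ell (\<gamma> * R)" by (rule ell_mono)
    also have "\<dots> \<le> exp (- (\<gamma> * R))" by (rule ell_le_exp)
    finally show "ell (z i \<bullet> (R *\<^sub>R wstar)) \<le> exp (- (\<gamma> * R))" .
  qed
  thus ?thesis unfolding L_eq using npos by (simp add: divide_simps mult.commute)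
qed

lemma L_small: assumes "real n * G w \<le> 1/2" shows "L w \<le> 2 * G w"
proof -
  have "(\<Sum>i<n. ell (z i \<bullet> w)) \<le> (\<Sum>i<n. 2 * sg (z i \<bullet> w))"
  proof (rule sum_mono)
    fix i assume i: "i \<in> {..<n}"
    have "sg (z i \<bullet> w) \<le> (\<Sum>j<n. sg (z j \<bullet> w))"
      by (rule member_le_sum[OF i]) (auto intro: less_imp_le sg_pos)
    also have "\<dots> = real n * G w" unfolding G_def using npos by simp
    finally show "ell (z i \<bullet> w) \<le> 2 * sg (z i \<bullet> w)" using assms by (intro ell_small) auto
  qed
  also have "\<dots> = 2 * (\<Sum>i<n. sg (z i \<bullet> w))" by (simp add: sum_distrib_left)
  finally have "(\<Sum>i<n. ell (z i \<bullet> w)) / real n \<le> 2 * (\<Sum>i<n. sg (z i \<bullet> w)) / real n"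
    using npos by (simp add: divide_right_mono)
  thus ?thesis unfolding L_eq G_def by simp
qed

lemma G_quad: "L w - real n * (L w)^2 \<le> G w"
proof -
  define S where "S = (\<Sum>i<n. ell (z i \<bullet> w))"
  have "(\<Sum>i<n. (ell (z i \<bullet> w))^2) \<le> (\<Sum>i<n. ell (z i \<bullet> w) * S)"
  proof (rule sum_mono)
    fix i assume i: "i \<in> {..<n}"
    have "ell (z i \<bullet> w) \<le> S" unfolding S_def
      by (rule member_le_sum[OF i]) (auto intro: less_imp_le ell_pos)
    thus "(ell (z i \<bullet> w))^2 \<le> ell (z i \<bullet> w) * S"
      using ell_pos[of "z i \<bullet> w"] by (simp add: power2_eq_square mult_left_mono)
  qed
  also have "\<dots> = S^2" unfolding S_def by (simp add: sum_distrib_right power2_eq_square)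
  finally have sq: "(\<Sum>i<n. (ell (z i \<bullet> w))^2) \<le> S^2" .
  have "(\<Sum>i<n. ell (z i \<bullet> w) - (ell (z i \<bullet> w))^2) \<le> (\<Sum>i<n. sg (z i \<bullet> w))"
    by (rule sum_mono) (rule sg_quad)
  hence "S - S^2 \<le> (\<Sum>i<n. sg (z i \<bullet> w))" using sq unfolding S_def by (simp add: sum_subtractf)
  moreover have "L w = S / real n" unfolding L_eq S_def by simp
  moreover have "G w = (\<Sum>i<n. sg (z i \<bullet> w)) / real n" unfolding G_def by simp
  ultimately have "real n * L w - (real n * L w)^2 \<le> real n * G w" using npos by simp
  hence "real n * (L w - real n * (L w)^2) \<le> real n * G w" by (simp add: algebra_simps power2_eq_square)
  thus ?thesis using npos by simp
qed

lemma descent: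
  assumes "0 \<le> eta" "eta * G w \<le> 1/2"
  shows "L (w - eta *\<^sub>R D w) \<le> L w - eta / 2 * (norm (D w))^2"
proof -
  define d where "d = D w"
  have b: "\<bar>- eta * (z i \<bullet> d)\<bar> \<le> 1/2" if "i < n" for i
  proof -
    have "\<bar>z i \<bullet> d\<bar> \<le> norm (z i) * norm d" by (rule Cauchy_Schwarz_ineq2)
    also have "\<dots> \<le> norm d" using z_norm[OF that] by (simp add: mult_left_le_one_le)
    also have "\<dots> \<le> G w" unfolding d_def by (rule norm_D)
    finally have "eta * \<bar>z i \<bullet> d\<bar> \<le> eta * G w" using assms by (intro mult_left_mono) auto
    thus ?thesis using assms by (simp add: abs_mult)
  qed
  have "(\<Sum>i<n. ell (z i \<bullet> (w - eta *\<^sub>R d))) \<le>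
        (\<Sum>i<n. ell (z i \<bullet> w) - sg (z i \<bullet> w) * (- eta * (z i \<bullet> d)) + sg (z i \<bullet> w) * (- eta * (z i \<bullet> d))^2)"
  proof (rule sum_mono)
    fix i assume "i \<in> {..<n}"
    hence "i < n" by simp
    hence "\<bar>- eta * (z i \<bullet> d)\<bar> \<le> 1" using b[of i] by linarith
    from ell_step[OF this, of "z i \<bullet> w"]
    show "ell (z i \<bullet> (w - eta *\<^sub>R d)) \<le> ell (z i \<bullet> w) - sg (z i \<bullet> w) * (- eta * (z i \<bullet> d)) + sg (z i \<bullet> w) * (- eta * (z i \<bullet> d))^2"
      by (simp add: inner_diff_right algebra_simps)
  qed
  also have "\<dots> = (\<Sum>i<n. ell (z i \<bullet> w)) + eta * ((\<Sum>i<n. sg (z i \<bullet> w) *\<^sub>R z i) \<bullet> d)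
        + eta^2 * (\<Sum>i<n. sg (z i \<bullet> w) * (z i \<bullet> d)^2)"
  proof -
    have e: "ell (z i \<bullet> w) - sg (z i \<bullet> w) * (- eta * (z i \<bullet> d)) + sg (z i \<bullet> w) * (- eta * (z i \<bullet> d))^2
      = ell (z i \<bullet> w) + eta * (sg (z i \<bullet> w) * (z i \<bullet> d)) + eta^2 * (sg (z i \<bullet> w) * (z i \<bullet> d)^2)" for i
      by (simp add: power2_eq_square algebra_simps)
    show ?thesis unfolding e sum.distrib sum_distrib_left[symmetric] inner_sum_left by simp
  qed
  also have "(\<Sum>i<n. sg (z i \<bullet> w) *\<^sub>R z i) = - (real n *\<^sub>R d)"
    unfolding d_def D_def using npos by simp
  finally have A: "(\<Sum>i<n. ell (z i \<bullet> (w - eta *\<^sub>R d))) \<le> (\<Sum>i<n. ell (z i \<bullet> w)) + eta * (- (real n *\<^sub>R d) \<bullet> d)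
        + eta^2 * (\<Sum>i<n. sg (z i \<bullet> w) * (z i \<bullet> d)^2)" .
  have "(\<Sum>i<n. sg (z i \<bullet> w) * (z i \<bullet> d)^2) \<le> (\<Sum>i<n. sg (z i \<bullet> w) * (norm d)^2)"
  proof (rule sum_mono)
    fix i assume "i \<in> {..<n}"
    hence "i < n" by simp
    have "\<bar>z i \<bullet> d\<bar> \<le> norm (z i) * norm d" by (rule Cauchy_Schwarz_ineq2)
    also have "\<dots> \<le> norm d" using z_norm[OF \<open>i < n\<close>] by (simp add: mult_left_le_one_le)
    finally have "\<bar>z i \<bullet> d\<bar> \<le> norm d" .
    hence "\<bar>z i \<bullet> d\<bar>^2 \<le> (norm d)^2" by (rule power_mono) simp
    hence "(z i \<bullet> d)^2 \<le> (norm d)^2" by simp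
    thus "sg (z i \<bullet> w) * (z i \<bullet> d)^2 \<le> sg (z i \<bullet> w) * (norm d)^2"
      using sg_pos by (intro mult_left_mono) (auto intro: less_imp_le)
  qed
  also have "\<dots> = real n * G w * (norm d)^2" unfolding G_def using npos by (simp add: sum_distrib_right)
  finally have B: "eta^2 * (\<Sum>i<n. sg (z i \<bullet> w) * (z i \<bullet> d)^2) \<le> eta^2 * (real n * G w * (norm d)^2)"
    by (intro mult_left_mono) auto
  have C: "real n * L (w - eta *\<^sub>R d) = (\<Sum>i<n. ell (z i \<bullet> (w - eta *\<^sub>R d)))"
    "real n * L w = (\<Sum>i<n. ell (z i \<bullet> w))" unfolding L_eq using npos by auto
  have E: "eta * (- (real n *\<^sub>R d) \<bullet> d) = - (eta * real n * (norm d)^2)"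
    by (simp add: power2_norm_eq_inner)
  have main: "real n * L (w - eta *\<^sub>R d) \<le> real n * L w - eta * real n * (norm d)^2
       + eta^2 * (real n * G w) * (norm d)^2"
    using A B C E by (simp add: mult_ac dot_square_norm)
  have "eta^2 * (real n * G w) * (norm d)^2 = real n * ((eta * G w) * (eta * (norm d)^2))"
    by (simp add: power2_eq_square mult_ac)
  also have "\<dots> \<le> real n * (1/2 * (eta * (norm d)^2))"
    using assms npos by (intro mult_left_mono mult_right_mono) auto
  finally have "real n * L (w - eta *\<^sub>R d) \<le> real n * (L w - eta / 2 * (norm d)^2)"
    using main by (simp add: algebra_simps)
  thus ?thesis using npos unfolding d_def by simp
qed


abbreviation W where "W eta k \<equiv> gd eta (logloss n x y) k"

lemma W_Suc: "W eta (Suc k) = W eta k - eta *\<^sub>R D (W eta k)"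
  by (simp add: gradD)

lemma gamma_le1: "\<gamma> \<le> 1"
proof -
  have "0 < n" using n_pos by simp
  have "\<gamma> \<le> z 0 \<bullet> wstar" using z_margin[OF \<open>0 < n\<close>] .
  also have "\<dots> \<le> norm (z 0) * norm wstar" by (rule order_trans[OF abs_ge_self Cauchy_Schwarz_ineq2])
  also have "\<dots> \<le> 1" using z_norm[OF \<open>0 < n\<close>] wstar_unit by simp
  finally show ?thesis .
qed

lemma norm_D_lower: "\<gamma> * G w \<le> norm (D w)"
proof -
  have "\<gamma> * G w \<le> - (D w \<bullet> wstar)" using D_wstar[of w] by simp
  also have "\<dots> \<le> \<bar>D w \<bullet> wstar\<bar>" by simp
  also have "\<dots> \<le> norm (D w) * norm wstar" by (rule Cauchy_Schwarz_ineq2)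
  finally show ?thesis using wstar_unit by simp
qed

lemma perceptron: assumes "0 \<le> eta"
  shows "eta * \<gamma> * (\<Sum>k<t. G (W eta k)) \<le> W eta t \<bullet> wstar"
proof (induction t)
  case 0 thus ?case by simp
next
  case (Suc t)
  have "eta * (\<gamma> * G (W eta t)) \<le> eta * (- (D (W eta t) \<bullet> wstar))"
    using D_wstar[of "W eta t"] assms by (intro mult_left_mono) auto
  thus ?case using Suc.IH by (simp add: gradD inner_diff_left algebra_simps)
qed

lemma potential:
  assumes "0 \<le> eta" "0 \<le> R"
  defines "u \<equiv> (R + eta / (2 * \<gamma>)) *\<^sub>R wstar"
  shows "(norm (W eta t - u))^2 \<le> (norm u)^2 + 2 * eta * real t * exp (- (\<gamma> * R))"
proof (induction t)
  case 0 thus ?case by simp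
next
  case (Suc t)
  define v where "v = W eta t"
  define d where "d = D v"
  have "(norm (W eta (Suc t) - u))^2 = (norm ((v - u) - eta *\<^sub>R d))^2"
    unfolding v_def d_def W_Suc by (simp add: algebra_simps)
  also have "\<dots> = (norm (v - u))^2 + 2 * eta * (d \<bullet> (u - v)) + eta^2 * (norm d)^2"
    unfolding power2_norm_eq_inner by (simp add: inner_diff_left inner_diff_right inner_commute algebra_simps power2_eq_square)
  also have "d \<bullet> (u - v) = d \<bullet> (R *\<^sub>R wstar - v) + (eta / (2 * \<gamma>)) * (d \<bullet> wstar)"
    unfolding u_def by (simp add: inner_diff_right algebra_simps)
  finally have e: "(norm (W eta (Suc t) - u))^2 = (norm (v - u))^2
     + 2 * eta * (d \<bullet> (R *\<^sub>R wstar - v)) + eta^2 / \<gamma> * (d \<bullet> wstar) + eta^2 * (norm d)^2"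
    using gamma_pos by (simp add: algebra_simps power2_eq_square)
  have c1: "d \<bullet> (R *\<^sub>R wstar - v) \<le> exp (- (\<gamma> * R))"
    using D_conv[of v "R *\<^sub>R wstar"] L_pos[of v] L_Rw[OF assms(2)] unfolding d_def by linarith
  have "eta^2 / \<gamma> * (d \<bullet> wstar) \<le> eta^2 / \<gamma> * (- \<gamma> * G v)"
    using D_wstar[of v] gamma_pos unfolding d_def by (intro mult_left_mono) auto
  hence c2: "eta^2 / \<gamma> * (d \<bullet> wstar) \<le> - (eta^2 * G v)" using gamma_pos by simp
  have "(norm d)^2 \<le> (G v)^2" unfolding d_def by (rule power_mono[OF norm_D]) simp
  also have "\<dots> \<le> G v" using G_pos[of v] G_le1[of v] by (simp add: power2_eq_square mult_left_le_one_le)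
  finally have c3: "eta^2 * (norm d)^2 \<le> eta^2 * G v" by (intro mult_left_mono) auto
  have "2 * eta * (d \<bullet> (R *\<^sub>R wstar - v)) \<le> 2 * eta * exp (- (\<gamma> * R))"
    using c1 assms by (intro mult_left_mono) auto
  thus ?case using e c2 c3 Suc.IH unfolding v_def by (simp add: algebra_simps)
qed


lemma exp6: "exp (- 6) \<le> (1::real) / 120"
proof -
  have "(5::real) \<le> exp 2" using exp_lower_Taylor_quadratic[of "2::real"] by simp
  hence "(5::real)^3 \<le> (exp 2)^3" by (rule power_mono) simp
  also have "(exp (2::real))^3 = exp 6" by (simp add: exp_of_nat_mult[symmetric])
  finally have "120 \<le> exp (6::real)" by simp
  thus ?thesis by (simp add: exp_minus divide_simps)
qed

lemma arith1:
  fixes g eta t N E :: real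
  assumes gp: "0 < g" and e: "2.5 \<le> eta" and t1: "60 * eta - 1/2 \<le> g^2 * t" and t2: "g^2 * t \<le> 60 * eta"
    and tn: "0 \<le> t"
    and N0: "0 \<le> N" and E: "E \<le> 1/120" and E0: "0 \<le> E"
    and NB: "N^2 \<le> (6 / g + eta / (2 * g))^2 + 2 * eta * t * E"
    and low: "g * t / 6 \<le> N + (6 / g + eta / (2 * g))"
  shows False
proof -
  define c where "c = 6 / g + eta / (2 * g)"
  have cpos: "0 \<le> c" unfolding c_def using gp e by simp
  have "2 * eta * t * E \<le> 2 * eta * t * (1/120)"
    using E e tn by (intro mult_left_mono) auto
  also have "\<dots> = eta * (g^2 * t) / (60 * g^2)" using gp by (simp add: field_simps)
  also have "\<dots> \<le> eta * (60 * eta) / (60 * g^2)"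
    using t2 e gp by (intro divide_right_mono mult_left_mono) auto
  also have "\<dots> = (eta / g)^2" using gp by (simp add: power2_eq_square)
  finally have "N^2 \<le> c^2 + (eta / g)^2" using NB unfolding c_def by linarith
  also have "\<dots> \<le> (c + eta / g)^2" using cpos e gp by (simp add: power2_eq_square algebra_simps)
  finally have h: "N^2 \<le> (c + eta / g)^2" .
  have "0 \<le> c + eta / g" using cpos e gp by simp
  from power2_le_imp_le[OF h this] have "N \<le> c + eta / g" .
  moreover have "g * t / 6 \<le> N + c" using low unfolding c_def .
  ultimately have "g * t / 6 \<le> 2 * c + eta / g" by linarith
  also have "2 * c + eta / g = (12 + 2 * eta) / g" unfolding c_def using gp by (simp add: field_simps)
  finally have "g * (g * t / 6) \<le> g * ((12 + 2 * eta) / g)" using gp by (intro mult_left_mono) auto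
  moreover have "g * (g * t / 6) = g^2 * t / 6" by (simp add: power2_eq_square)
  moreover have "g * ((12 + 2 * eta) / g) = 12 + 2 * eta" using gp by simp
  ultimately have "g^2 * t \<le> 72 + 12 * eta" by linarith
  thus False using t1 e by linarith
qed

lemma phase1:
  assumes e: "exp 1 \<le> eta" and t1: "60 * eta - 1/2 \<le> \<gamma>^2 * real t" and t2: "\<gamma>^2 * real t \<le> 60 * eta"
  shows "\<exists>k<t. G (W eta k) \<le> 1 / (6 * eta)"
proof (rule ccontr)
  assume "\<not> ?thesis"
  hence big: "\<And>k. k < t \<Longrightarrow> 1 / (6 * eta) < G (W eta k)" by (simp add: not_le)
  have e25: "2.5 \<le> exp (1::real)" using exp_lower_Taylor_quadratic[of "1::real"] by simp
  have etapos: "0 < eta" using e25 e by simp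
  have gp: "0 < \<gamma>" by (rule gamma_pos)
  have "(\<Sum>k<t. 1 / (6 * eta)) \<le> (\<Sum>k<t. G (W eta k))"
    by (rule sum_mono) (use big in \<open>auto intro: less_imp_le\<close>)
  hence sG: "real t / (6 * eta) \<le> (\<Sum>k<t. G (W eta k))" by simp
  have "eta * \<gamma> * (real t / (6 * eta)) \<le> eta * \<gamma> * (\<Sum>k<t. G (W eta k))"
    using sG etapos gp by (intro mult_left_mono) auto
  also have "\<dots> \<le> W eta t \<bullet> wstar" by (rule perceptron) (use etapos in simp)
  also have "eta * \<gamma> * (real t / (6 * eta)) = \<gamma> * real t / 6" using etapos by simp
  finally have lowb: "\<gamma> * real t / 6 \<le> W eta t \<bullet> wstar" .
  define c where "c = 6 / \<gamma> + eta / (2 * \<gamma>)"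
  have cpos: "0 \<le> c" unfolding c_def using gp etapos by simp
  define u where "u = c *\<^sub>R wstar"
  have nu: "norm u = c" unfolding u_def using cpos wstar_unit by simp
  have "(norm (W eta t - u))^2 \<le> (norm u)^2 + 2 * eta * real t * exp (- (\<gamma> * (6 / \<gamma>)))"
    unfolding u_def c_def using potential[of eta "6/\<gamma>" t] etapos gp by simp
  also have "exp (- (\<gamma> * (6 / \<gamma>))) = exp (-6)" using gp by simp
  finally have NB: "(norm (W eta t - u))^2 \<le> c^2 + 2 * eta * real t * exp (-6)" using nu by simp
  have "norm (W eta t) \<le> norm (W eta t - u) + c" using norm_triangle_sub[of "W eta t" u] nu by linarith
  moreover have "W eta t \<bullet> wstar \<le> norm (W eta t)"
    using Cauchy_Schwarz_ineq2[of "W eta t" wstar] wstar_unit by simp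
  ultimately have low: "\<gamma> * real t / 6 \<le> norm (W eta t - u) + c" using lowb by linarith
  show False
    by (rule arith1[OF gp _ t1 t2 _ _ exp6 _ NB[unfolded c_def] low[unfolded c_def]])
      (use e e25 in auto)
qed

lemma recip_step:
  fixes a b c :: real
  assumes "0 < a" "0 < b" "0 \<le> c" "b \<le> a - c * a^2"
  shows "1 / a + c \<le> 1 / b"
proof -
  have "b * (1 + c * a) \<le> (a - c * a^2) * (1 + c * a)"
    using assms by (intro mult_right_mono) (auto intro: add_nonneg_nonneg)
  also have "\<dots> = a - c^2 * a^3" by (simp add: power2_eq_square power3_eq_cube algebra_simps)
  also have "\<dots> \<le> a" using assms by simp
  finally have "b * (1 + c * a) \<le> a" .
  thus ?thesis using assms by (simp add: field_simps)
qed

lemma phase2: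
  assumes "real n \<le> eta" "0 < eta" "eta * L (W eta s) \<le> 1/3"
  shows "eta * L (W eta (s + m)) \<le> 1/3 \<and>
         1 / L (W eta s) + (2/9) * eta * \<gamma>^2 * real m \<le> 1 / L (W eta (s + m))"
proof (induction m)
  case 0 thus ?case using assms by simp
next
  case (Suc m)
  define v where "v = W eta (s + m)"
  define c where "c = (2/9) * eta * \<gamma>^2"
  have IH1: "eta * L v \<le> 1/3" and IH2: "1 / L (W eta s) + c * real m \<le> 1 / L v"
    using Suc.IH unfolding v_def c_def by auto
  have Lp: "0 < L v" by (rule L_pos)
  have GL: "G v \<le> L v" by (rule G_le_L)
  have "eta * G v \<le> eta * L v" using GL assms by (intro mult_left_mono) auto
  hence eG: "eta * G v \<le> 1/2" using IH1 by linarith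
  have desc: "L (v - eta *\<^sub>R D v) \<le> L v - eta / 2 * (norm (D v))^2"
    by (rule descent) (use assms eG in auto)
  have "real n * L v \<le> eta * L v" using assms(1) Lp by (intro mult_right_mono) auto
  hence nL: "real n * L v \<le> 1/3" using IH1 by linarith
  have "L v - real n * (L v)^2 \<le> G v" by (rule G_quad)
  moreover have "real n * (L v)^2 \<le> (1/3) * L v"
    using nL Lp by (simp add: power2_eq_square mult_right_mono mult.assoc[symmetric])
  ultimately have G23: "(2/3) * L v \<le> G v" by linarith
  have "\<gamma> * ((2/3) * L v) \<le> \<gamma> * G v" using G23 gamma_pos by (intro mult_left_mono) auto
  also have "\<dots> \<le> norm (D v)" by (rule norm_D_lower)
  finally have "(\<gamma> * ((2/3) * L v))^2 \<le> (norm (D v))^2"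
    using gamma_pos Lp by (intro power_mono) auto
  hence "eta / 2 * (\<gamma> * ((2/3) * L v))^2 \<le> eta / 2 * (norm (D v))^2"
    using assms by (intro mult_left_mono) auto
  moreover have "eta / 2 * (\<gamma> * ((2/3) * L v))^2 = c * (L v)^2"
    unfolding c_def by (simp add: power2_eq_square)
  ultimately have dec: "L (v - eta *\<^sub>R D v) \<le> L v - c * (L v)^2" using desc by linarith
  have next_eq: "W eta (s + Suc m) = v - eta *\<^sub>R D v" unfolding v_def by (simp add: gradD)
  have cnn: "0 \<le> c" unfolding c_def using assms by simp
  have "L (v - eta *\<^sub>R D v) \<le> L v" using dec mult_nonneg_nonneg[OF cnn zero_le_power2[of "L v"]] by linarith
  hence "eta * L (v - eta *\<^sub>R D v) \<le> eta * L v" using assms by (intro mult_left_mono) auto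
  hence A: "eta * L (W eta (s + Suc m)) \<le> 1/3" using IH1 next_eq by simp
  have "1 / L v + c \<le> 1 / L (v - eta *\<^sub>R D v)"
    by (rule recip_step[OF Lp L_pos cnn dec])
  hence B: "1 / L (W eta s) + c * real (Suc m) \<le> 1 / L (W eta (s + Suc m))"
    unfolding next_eq using IH2 by (simp add: algebra_simps)
  show ?case using A B unfolding c_def by simp
qed

end


lemma final_arith:
  fixes g TT eta LT :: real
  assumes gp: "0 < g" and big: "300 \<le> g^2 * TT" and eta: "eta = g^2 * TT / 120"
    and LT: "LT \<le> 2 / ((2/9) * eta * g^2 * TT)"
  shows "LT \<le> 480 * (ln (g^4 * TT^2))^2 / (g^4 * TT^2)"
proof -
  define lam where "lam = g^4 * TT^2"
  have lam: "lam = (g^2 * TT)^2" unfolding lam_def by (simp add: power_mult_distrib power_mult[symmetric])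
  have gT: "0 < g^2 * TT" using big by linarith
  have lampos: "0 < lam" unfolding lam by (rule zero_less_power[OF gT])
  have "2 / ((2/9) * eta * g^2 * TT) = 1080 / lam" unfolding lam eta using gT gp
    by (simp add: power2_eq_square field_simps)
  hence LT': "LT \<le> 1080 / lam" using LT by simp
  have "exp (2::real) = (exp 1)^2" by (simp add: exp_of_nat_mult[symmetric])
  also have "\<dots> \<le> 3^2" using exp_le by (intro power_mono) auto
  finally have "exp (2::real) \<le> lam"
    unfolding lam using power_mono[OF big, of 2] by simp
  hence "2 \<le> ln lam" using lampos by (simp add: ln_ge_iff)
  hence "2^2 \<le> (ln lam)^2" by (intro power_mono) auto
  hence "1080 \<le> 480 * (ln lam)^2" by simp
  hence "1080 / lam \<le> 480 * (ln lam)^2 / lam" using lampos by (intro divide_right_mono) auto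
  thus ?thesis using LT' unfolding lam_def by simp
qed


theorem mainTheorem2:
  fixes n :: nat and x :: "nat \<Rightarrow> 'a::euclidean_space" and y :: "nat \<Rightarrow> real"
    and \<gamma> :: real and wstar :: 'a and T :: nat and \<eta> \<tau> :: real
  assumes n_pos: "n \<ge> 1"
    and x_bound: "\<forall>i<n. norm (x i) \<le> 1"
    and y_sign: "\<forall>i<n. y i \<in> {-1, 1}"
    and gamma_pos: "\<gamma> > 0"
    and wstar_unit: "norm wstar = 1"
    and margin: "\<forall>i<n. y i * (x i \<bullet> wstar) \<ge> \<gamma>"
    and T_large: "real T \<ge> 120 * max (exp 1) (real n) / \<gamma>^2"
    and eta_def: "\<eta> = \<gamma>^2 * real T / 120"
    and tau_def: "\<tau> = 60 / \<gamma>^2 * Max {\<eta>, real n, exp 1,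
                    (\<eta> + real n) / \<eta> * ln ((\<eta> + real n) / \<eta>)}"
  shows "\<tau> \<le> real T / 2 \<and>
         logloss n x y (gd \<eta> (logloss n x y) T)
           \<le> 480 * (ln (\<gamma>^4 * (real T)^2))^2 / (\<gamma>^4 * (real T)^2)"
proof -
  interpret LR n x y \<gamma> wstar
    by unfold_locales (use assms in auto)
  have gp: "0 < \<gamma>" by (rule gamma_pos)
  have g1: "\<gamma> \<le> 1" by (rule gamma_le1)
  have g2p: "0 < \<gamma>^2" using gp by simp
  have g21: "\<gamma>^2 \<le> 1" using gp g1 by (simp add: power_le_one)
  have "120 * max (exp 1) (real n) \<le> \<gamma>^2 * real T"
    using T_large g2p by (simp add: divide_le_eq mult.commute)
  hence etamax: "max (exp 1) (real n) \<le> \<eta>" unfolding eta_def by simp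
  have e25: "2.5 \<le> exp (1::real)" using exp_lower_Taylor_quadratic[of "1::real"] by simp
  have etae: "exp 1 \<le> \<eta>" and etan: "real n \<le> \<eta>" using etamax by auto
  have etapos: "0 < \<eta>" using etae e25 by simp
  have r1: "1 \<le> (\<eta> + real n) / \<eta>" using etapos by simp
  have r2: "(\<eta> + real n) / \<eta> \<le> 2" using etapos etan by (simp add: divide_simps)
  have "ln ((\<eta> + real n) / \<eta>) \<le> (\<eta> + real n) / \<eta> - 1" using r1 by (intro ln_le_minus_one) simp
  hence lnr: "ln ((\<eta> + real n) / \<eta>) \<le> 1" using r2 by simp
  have "(\<eta> + real n) / \<eta> * ln ((\<eta> + real n) / \<eta>) \<le> 2 * 1"
    using r1 r2 lnr ln_ge_zero[OF r1] by (intro mult_mono) auto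
  hence rl: "(\<eta> + real n) / \<eta> * ln ((\<eta> + real n) / \<eta>) \<le> \<eta>" using etae e25 by simp
  have "Max {\<eta>, real n, exp 1, (\<eta> + real n) / \<eta> * ln ((\<eta> + real n) / \<eta>)} = \<eta>"
    by (rule Max_eqI) (use etan etae rl in auto)
  hence "\<tau> = 60 / \<gamma>^2 * \<eta>" unfolding tau_def by simp
  hence tau: "\<tau> = real T / 2" unfolding eta_def using g2p by simp
  define t where "t = T div 2"
  have tT1: "2 * real t \<le> real T" unfolding t_def by linarith
  have tT2: "real T \<le> 2 * real t + 1" unfolding t_def by linarith
  have t2: "\<gamma>^2 * real t \<le> 60 * \<eta>" unfolding eta_def using tT1 g2p by (simp add: mult_left_mono)
  have "\<gamma>^2 * real T \<le> \<gamma>^2 * (2 * real t + 1)" using tT2 g2p by (intro mult_left_mono) auto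
  hence t1: "60 * \<eta> - 1/2 \<le> \<gamma>^2 * real t" unfolding eta_def using g21 by (simp add: algebra_simps)
  obtain k where kt: "k < t" and Gk: "G (W \<eta> k) \<le> 1 / (6 * \<eta>)"
    using phase1[OF etae t1 t2] by blast
  have "real n * G (W \<eta> k) \<le> \<eta> * G (W \<eta> k)" using etan G_pos[of "W \<eta> k"] by (intro mult_right_mono) auto
  also have "\<dots> \<le> \<eta> * (1 / (6 * \<eta>))" using Gk etapos by (intro mult_left_mono) auto
  also have "\<dots> = 1/6" using etapos by simp
  finally have "real n * G (W \<eta> k) \<le> 1/2" by simp
  hence "L (W \<eta> k) \<le> 2 * G (W \<eta> k)" by (rule L_small)
  hence "\<eta> * L (W \<eta> k) \<le> \<eta> * (2 * (1 / (6 * \<eta>)))" using Gk etapos by (intro mult_left_mono) auto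
  hence Lk: "\<eta> * L (W \<eta> k) \<le> 1/3" using etapos by simp
  have kT: "k + (T - k) = T" using kt unfolding t_def by simp
  note ph2 = phase2[OF etan etapos Lk, of "T - k", unfolded kT]
  define c where "c = (2/9) * \<eta> * \<gamma>^2"
  have cpos: "0 < c" unfolding c_def using etapos g2p by simp
  have inv: "1 / L (W \<eta> k) + c * real (T - k) \<le> 1 / L (W \<eta> T)" using ph2 unfolding c_def by simp
  have "0 < 1 / L (W \<eta> k)" using L_pos by simp
  hence inv2: "c * real (T - k) \<le> 1 / L (W \<eta> T)" using inv by linarith
  have Tk: "real T / 2 \<le> real (T - k)" using kt tT1 by (simp add: of_nat_diff)
  have Tpos: "0 < real T" using kt tT1 by simp
  have "c * (real T / 2) \<le> c * real (T - k)" using Tk cpos by (intro mult_left_mono) auto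
  hence ineq: "c * real T / 2 \<le> 1 / L (W \<eta> T)" using inv2 by simp
  have LTp: "0 < L (W \<eta> T)" by (rule L_pos)
  have cT: "0 < c * real T / 2" using cpos Tpos by simp
  have "L (W \<eta> T) \<le> 1 / (c * real T / 2)"
    using ineq LTp cT by (simp add: divide_simps mult.commute)
  hence LTb: "L (W \<eta> T) \<le> 2 / ((2/9) * \<eta> * \<gamma>^2 * real T)" unfolding c_def by simp
  have big: "300 \<le> \<gamma>^2 * real T" using etae e25 eta_def by simp
  have "L (W \<eta> T) \<le> 480 * (ln (\<gamma>^4 * (real T)^2))^2 / (\<gamma>^4 * (real T)^2)"
    by (rule final_arith[OF gp big eta_def LTb])
  thus ?thesis using tau unfolding L_def by simp
qed

end
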